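(* Let $m,r$ be integers with $m>1$, $r>2$. Every numerical semigroup $S\in\mathcal{MA}(m,r)$ has exactly $\left\lfloor\frac{\mathrm{F}(S)-\mathrm{M}(S)}{m}\right\rfloor+1$ children in the graph $G(\mathcal{MA}(m,r))$.
   Context: $\mathbb{N}=\{0,1,2,\ldots\}$. A numerical semigroup is a subset $S\subseteq\mathbb{N}$ closed under addition, containing $0$, with finite complement; $\mathrm{msg}(S)=\{n_1<\cdots<n_e\}$ is its unique finite minimal system of generators, $\mathrm{m}(S)=n_1$, $\mathrm{r}(S)=n_2$, $\mathrm{M}(S)=n_e$; $\mathrm{F}(S)$ is the largest integer not in $S$. $S$ is a MANS-semigroup if $w(1)<\cdots<w(\mathrm{m}(S)-1)$, where $w(i)$ is the least element of $S$ congruent to $i$ modulo $\mathrm{m}(S)$. $\mathcal{MA}(m,r)$ is the set of MANS-semigroups $S$ with $\mathrm{m}(S)=m$ and $\mathrm{r}(S)=r$. $G(\mathcal{MA}(m,r))$ is the directed graph with vertex set $\mathcal{MA}(m,r)$ in which $(T,S)$ is an edge iff $\mathrm{msg}(S)=\mathrm{msg}(T)\setminus\{\mathrm{M}(T)\}$; in that case $T$ is a child of $S$. *)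

theory Defs
  imports Main
begin

definition numerical_semigroup :: "nat set \<Rightarrow> bool" where
  "numerical_semigroup S \<longleftrightarrow> 0 \<in> S \<and> (\<forall>x\<in>S. \<forall>y\<in>S. x + y \<in> S) \<and> finite (UNIV - S)"

inductive_set generated :: "nat set \<Rightarrow> nat set" for A :: "nat set" where
  gen_zero: "0 \<in> generated A"
| gen_add: "a \<in> A \<Longrightarrow> x \<in> generated A \<Longrightarrow> a + x \<in> generated A"

definition msg :: "nat set \<Rightarrow> nat set" where
  "msg S = (THE A. generated A = S \<and> (\<forall>B. B \<subset> A \<longrightarrow> generated B \<noteq> S))"

definition mult :: "nat set \<Rightarrow> nat" where
  "mult S = Min (msg S)"

definition rgen :: "nat set \<Rightarrow> nat" where
  "rgen S = Min (msg S - {mult S})"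

definition maxgen :: "nat set \<Rightarrow> nat" where
  "maxgen S = Max (msg S)"

definition frobenius :: "nat set \<Rightarrow> int" where
  "frobenius S = int (Max (UNIV - S))"

definition apery_w :: "nat set \<Rightarrow> nat \<Rightarrow> nat" where
  "apery_w S i = (LEAST x. x \<in> S \<and> x mod mult S = i)"

definition MANS :: "nat set \<Rightarrow> bool" where
  "MANS S \<longleftrightarrow> (\<forall>i j. 1 \<le> i \<and> i < j \<and> j \<le> mult S - 1 \<longrightarrow> apery_w S i < apery_w S j)"

definition MA :: "nat \<Rightarrow> nat \<Rightarrow> nat set set" where
  "MA m r = {S. numerical_semigroup S \<and> MANS S \<and> mult S = m \<and> rgen S = r}"

definition children_MA :: "nat \<Rightarrow> nat \<Rightarrow> nat set \<Rightarrow> nat set set" where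
  "children_MA m r S = {T \<in> MA m r. msg S = msg T - {maxgen T}}"

end

theory Submission
  imports Defs
begin

lemma gen_in: "a \<in> A \<Longrightarrow> a \<in> generated A"
  using gen_add[OF _ gen_zero, of a A] by simp

lemma gen_closed: "x \<in> generated A \<Longrightarrow> y \<in> generated A \<Longrightarrow> x + y \<in> generated A"
proof (induction x rule: generated.induct)
  case gen_zero then show ?case by simp
next
  case (gen_add a x) then show ?case using generated.gen_add[of a A "x+y"] by (simp add: add.assoc)
qed

lemma gen_mono0: "x \<in> generated A \<Longrightarrow> A \<subseteq> B \<Longrightarrow> x \<in> generated B"
proof (induction x rule: generated.induct)
  case gen_zero then show ?case by (simp add: generated.gen_zero)
next
  case (gen_add a x) then show ?case using generated.gen_add[of a B x] by blast
qed

lemma gen_mono: "A \<subseteq> B \<Longrightarrow> generated A \<subseteq> generated B"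
  using gen_mono0 by blast

lemma gen_sub0: "x \<in> generated A \<Longrightarrow> A \<subseteq> S \<Longrightarrow> 0 \<in> S \<Longrightarrow> (\<forall>x\<in>S. \<forall>y\<in>S. x+y\<in>S) \<Longrightarrow> x \<in> S"
  by (induction x rule: generated.induct) auto

lemma gen_sub: "A \<subseteq> S \<Longrightarrow> 0 \<in> S \<Longrightarrow> (\<forall>x\<in>S. \<forall>y\<in>S. x+y\<in>S) \<Longrightarrow> generated A \<subseteq> S"
  using gen_sub0 by blast

lemma gen_decomp: "t \<in> generated A \<Longrightarrow> t \<noteq> 0 \<Longrightarrow> \<exists>a\<in>A. \<exists>y\<in>generated A. a \<noteq> 0 \<and> t = a + y"
proof (induction t rule: generated.induct)
  case gen_zero then show ?case by simp
next
  case (gen_add a x)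
  show ?case
  proof (cases "a = 0")
    case True
    then have "x \<noteq> 0" using gen_add.prems by simp
    then obtain a' y where "a' \<in> A" "y \<in> generated A" "a' \<noteq> 0" "x = a' + y"
      using gen_add.IH by blast
    then show ?thesis using True by auto
  next
    case False
    then show ?thesis using gen_add.hyps by blast
  qed
qed

definition irr :: "nat set \<Rightarrow> nat set" where
  "irr S = {y \<in> S. y \<noteq> 0 \<and> \<not>(\<exists>a\<in>S. \<exists>b\<in>S. a \<noteq> 0 \<and> b \<noteq> 0 \<and> y = a + b)}"

lemma irrD: "y \<in> irr S \<Longrightarrow> a \<in> S \<Longrightarrow> b \<in> S \<Longrightarrow> y = a + b \<Longrightarrow> a = 0 \<or> b = 0"
  unfolding irr_def by auto

lemma irr_S: "y \<in> irr S \<Longrightarrow> y \<in> S" and irr_nz: "y \<in> irr S \<Longrightarrow> y \<noteq> 0"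
  unfolding irr_def by auto

lemma irrI: "y \<in> S \<Longrightarrow> y \<noteq> 0 \<Longrightarrow> (\<And>a b. a\<in>S \<Longrightarrow> b\<in>S \<Longrightarrow> y = a+b \<Longrightarrow> a=0 \<or> b=0) \<Longrightarrow> y \<in> irr S"
  unfolding irr_def by auto

lemma not_irr: "y \<in> S \<Longrightarrow> y \<noteq> 0 \<Longrightarrow> y \<notin> irr S \<Longrightarrow> \<exists>a b. a \<in> S \<and> b \<in> S \<and> a\<noteq>0 \<and> b\<noteq>0 \<and> y = a+b"
  unfolding irr_def by auto

lemma irr_sub_gen: "generated A = S \<Longrightarrow> irr S \<subseteq> A"
proof
  fix y assume h: "generated A = S" "y \<in> irr S"
  then have "y \<in> generated A" "y \<noteq> 0" by (auto simp: irr_def)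
  then obtain a z where "a \<in> A" "z \<in> generated A" "a \<noteq> 0" "y = a + z"
    using gen_decomp by blast
  moreover have "a \<in> S" using \<open>a \<in> A\<close> h(1) gen_in by blast
  moreover have "z \<in> S" using \<open>z \<in> generated A\<close> h(1) by blast
  ultimately have "z = 0" using h(2) irrD \<open>y = a + z\<close> \<open>a \<noteq> 0\<close> by blast
  then show "y \<in> A" using \<open>y = a + z\<close> \<open>a \<in> A\<close> by simp
qed

lemma ns_closed: "numerical_semigroup S \<Longrightarrow> x \<in> S \<Longrightarrow> y \<in> S \<Longrightarrow> x + y \<in> S"
  by (auto simp: numerical_semigroup_def)

lemma ns_zero: "numerical_semigroup S \<Longrightarrow> 0 \<in> S"
  by (auto simp: numerical_semigroup_def)

lemma gen_irr: assumes "numerical_semigroup S" shows "generated (irr S) = S"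
proof
  show "generated (irr S) \<subseteq> S"
    using gen_sub[of "irr S" S] assms irr_S by (auto simp: numerical_semigroup_def)
  show "S \<subseteq> generated (irr S)"
  proof
    fix y assume "y \<in> S"
    then show "y \<in> generated (irr S)"
    proof (induction y rule: less_induct)
      case (less y)
      show ?case
      proof (cases "y \<in> irr S \<or> y = 0")
        case True
        then show ?thesis using gen_in gen_zero by auto
      next
        case False
        then obtain a b where "a \<in> S" "b \<in> S" "a \<noteq> 0" "b \<noteq> 0" "y = a + b"
          using less.prems not_irr[of y S] by blast
        then have "a < y" "b < y" by auto
        then have "a \<in> generated (irr S)" "b \<in> generated (irr S)"
          using less.IH \<open>a \<in> S\<close> \<open>b \<in> S\<close> by auto
        then show ?thesis using \<open>y = a + b\<close> gen_closed by simp
      qed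
    qed
  qed
qed

lemma msg_eq: assumes "numerical_semigroup S" shows "msg S = irr S"
  unfolding msg_def
proof (rule the_equality)
  show "generated (irr S) = S \<and> (\<forall>B. B \<subset> irr S \<longrightarrow> generated B \<noteq> S)"
    using gen_irr[OF assms] irr_sub_gen by blast
next
  fix A assume h: "generated A = S \<and> (\<forall>B. B \<subset> A \<longrightarrow> generated B \<noteq> S)"
  then have "irr S \<subseteq> A" using irr_sub_gen by blast
  then show "A = irr S" using h gen_irr[OF assms] by blast
qed

lemma ns_bound: assumes "numerical_semigroup S" shows "\<exists>N. \<forall>y\<ge>N. y \<in> S"
proof -
  have "finite (UNIV - S)" using assms by (simp add: numerical_semigroup_def)
  then obtain k where k: "\<forall>n\<in>UNIV - S. n < k" unfolding finite_nat_set_iff_bounded by blast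
  have "\<forall>y\<ge>k. y \<in> S"
  proof (intro allI impI)
    fix y assume "k \<le> y" then show "y \<in> S" using k by (meson Diff_iff UNIV_I leD)
  qed
  then show ?thesis by blast
qed

lemma irr_finite: assumes "numerical_semigroup S" shows "finite (irr S)"
proof -
  obtain N where N: "\<forall>y\<ge>N. y \<in> S" using ns_bound[OF assms] by blast
  have "irr S \<subseteq> {..<2*N+2}"
  proof
    fix y assume y: "y \<in> irr S"
    show "y \<in> {..<2*N+2}"
    proof (rule ccontr)
      assume "y \<notin> {..<2*N+2}"
      then have "y \<ge> 2*N+2" by simp
      then have f: "y - (N+1) \<in> S" "N + 1 \<in> S" "y = (N+1) + (y - (N+1))" "y - (N+1) \<noteq> 0"
        using N by simp_all
      have "N + 1 = 0 \<or> y - (N+1) = 0" using irrD[OF y f(2) f(1) f(3)] .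
      then show False using \<open>y - (N+1) \<noteq> 0\<close> by simp
    qed
  qed
  then show ?thesis using finite_subset by blast
qed

lemma irr_nonempty: assumes "numerical_semigroup S" shows "irr S \<noteq> {}"
proof -
  obtain N where N: "\<forall>y\<ge>N. y \<in> S" using ns_bound[OF assms] by blast
  have "N+1 \<in> S" using N by simp
  then have "N+1 \<in> generated (irr S)" using gen_irr[OF assms] by simp
  then obtain a where "a \<in> irr S" using gen_decomp[of "N+1" "irr S"] by auto
  then show ?thesis by blast
qed

locale NSm =
  fixes S :: "nat set" and m :: nat
  assumes ns: "numerical_semigroup S" and mm: "mult S = m" and m1: "m > 1"
begin

abbreviation "w \<equiv> apery_w S"

lemma msgS: "msg S = irr S" using msg_eq[OF ns] .

lemma m_Min: "m = Min (irr S)" using mm msgS by (simp add: mult_def)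

lemma m_irr: "m \<in> irr S" using m_Min irr_finite[OF ns] irr_nonempty[OF ns] by simp

lemma m_S: "m \<in> S" using m_irr irr_S by blast

lemma ge_m: assumes "s \<in> S" "s \<noteq> 0" shows "m \<le> s"
proof -
  have "s \<in> generated (irr S)" using gen_irr[OF ns] assms by simp
  then obtain a y where "a \<in> irr S" "s = a + y" using gen_decomp assms by blast
  then show ?thesis using m_Min irr_finite[OF ns] by (simp add: le_add1 trans_le_add1)
qed

lemma closed: "x \<in> S \<Longrightarrow> y \<in> S \<Longrightarrow> x + y \<in> S" using ns_closed[OF ns] .

lemma zeroS: "0 \<in> S" using ns_zero[OF ns] .

lemma mult_in: "m * k \<in> S"
proof (induction k)
  case 0 then show ?case using zeroS by simp
next
  case (Suc k) then show ?case using closed[OF m_S Suc] by (simp add: add.commute)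
qed

lemma exists_res: assumes "i < m" shows "\<exists>x. x \<in> S \<and> x mod m = i"
proof -
  obtain N where N: "\<forall>y\<ge>N. y \<in> S" using ns_bound[OF ns] by blast
  have "N * 1 \<le> N * m" using m1 by (intro mult_le_mono2) simp
  then have "N * m + i \<ge> N" by (metis mult.right_neutral trans_le_add1)
  then have "N * m + i \<in> S" using N by blast
  moreover have "(N * m + i) mod m = i" using assms by simp
  ultimately show ?thesis by blast
qed

lemma w_prop: assumes "i < m" shows "w i \<in> S" "w i mod m = i"
proof -
  have "w i \<in> S \<and> w i mod m = i"
    unfolding apery_w_def mm using exists_res[OF assms] by (metis (mono_tags, lifting) LeastI)
  then show "w i \<in> S" "w i mod m = i" by auto
qed

lemma w_le: assumes "s \<in> S" "s mod m = i" shows "w i \<le> s"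
  unfolding apery_w_def mm using assms by (simp add: Least_le)

lemma in_S_ge: assumes "y mod m = i" "i < m" "w i \<le> y" shows "y \<in> S"
proof -
  have "y mod m = w i mod m" using assms w_prop(2)[OF assms(2)] by simp
  then have "m dvd y - w i" using mod_eq_dvd_iff_nat[OF assms(3)] by simp
  then obtain k where "y - w i = m * k" by (elim dvdE)
  then have "y = w i + m * k" using assms(3) by simp
  then show ?thesis using closed[OF w_prop(1)[OF assms(2)] mult_in] by simp
qed

lemma w0: "w 0 = 0"
  using w_le[OF zeroS, of 0] by simp

lemma w_nz: assumes "0 < i" "i < m" shows "w i \<noteq> 0"
  using w_prop(2)[OF assms(2)] assms by (metis mod_0 less_not_refl)

lemma w_ge_m: assumes "0 < i" "i < m" shows "w i > m"
proof -
  have "m \<le> w i" using ge_m w_prop(1) w_nz assms by blast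
  moreover have "w i \<noteq> m" using w_prop(2)[OF assms(2)] assms by auto
  ultimately show ?thesis by simp
qed

end

definition Pp :: "nat set \<Rightarrow> nat \<Rightarrow> bool" where
  "Pp S m \<longleftrightarrow> (\<forall>s\<in>S. 2 \<le> s mod m \<longrightarrow> (\<exists>t\<in>S. t < s \<and> t mod m = s mod m - 1))"

context NSm begin

lemma MANS_imp_Pp: assumes "MANS S" shows "Pp S m"
  unfolding Pp_def
proof (intro ballI impI)
  fix s assume s: "s \<in> S" "2 \<le> s mod m"
  define k where "k = s mod m"
  have k: "2 \<le> k" "k < m" using s m1 k_def by auto
  have all: "\<forall>i j. 1 \<le> i \<and> i < j \<and> j \<le> m - 1 \<longrightarrow> w i < w j" using assms mm unfolding MANS_def by simp
  have "1 \<le> k-1 \<and> k-1 < k \<and> k \<le> m-1" using k by linarith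
  then have "w (k-1) < w k" using all by blast
  moreover have "w k \<le> s" using w_le[OF s(1)] k_def by simp
  moreover have "w (k-1) \<in> S" "w (k-1) mod m = k - 1" using w_prop[of "k-1"] k by auto
  ultimately show "\<exists>t\<in>S. t < s \<and> t mod m = s mod m - 1" using k_def by force
qed

lemma Pp_imp_MANS: assumes "Pp S m" shows "MANS S"
proof -
  have step: "w (b-1) < w b" if "2 \<le> b" "b < m" for b
  proof -
    have wb: "w b \<in> S" "w b mod m = b" using w_prop that by auto
    then have "2 \<le> w b mod m" using that by simp
    from assms[unfolded Pp_def, rule_format, OF wb(1) this] wb(2)
    obtain t where t: "t \<in> S" "t < w b" "t mod m = b - 1" by auto
    then show ?thesis using w_le[OF t(1) t(3)] by simp
  qed
  have main: "i < j \<longrightarrow> j \<le> m - 1 \<longrightarrow> w i < w j" if "1 \<le> i" for i j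
  proof (induction j)
    case 0 then show ?case by simp
  next
    case (Suc j)
    show ?case
    proof (intro impI)
      assume h: "i < Suc j" "Suc j \<le> m - 1"
      have st: "w j < w (Suc j)" using step[of "Suc j"] h that by simp
      show "w i < w (Suc j)"
      proof (cases "i = j")
        case True then show ?thesis using st by simp
      next
        case False then show ?thesis using Suc.IH h st by simp
      qed
    qed
  qed
  show ?thesis unfolding MANS_def mm using main by blast
qed

end

locale MS = NSm +
  assumes mans: "MANS S"
begin

lemma w_strict: "1 \<le> a \<Longrightarrow> a < b \<Longrightarrow> b \<le> m - 1 \<Longrightarrow> w a < w b"
  using mans mm unfolding MANS_def by blast

lemma w_mono: "1 \<le> a \<Longrightarrow> a \<le> b \<Longrightarrow> b \<le> m - 1 \<Longrightarrow> w a \<le> w b"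
  using w_strict by (cases "a = b") (auto intro: less_imp_le)

lemma PpS: "Pp S m" using MANS_imp_Pp[OF mans] .

definition "M = Max (irr S)"

lemma M_irr: "M \<in> irr S" unfolding M_def using irr_finite[OF ns] irr_nonempty[OF ns] by simp

lemma le_M: "g \<in> irr S \<Longrightarrow> g \<le> M" unfolding M_def using irr_finite[OF ns] by simp

lemma all_mod0: assumes "\<forall>g\<in>A. g mod m = 0" "x \<in> generated A" shows "x mod m = 0"
  using assms(2,1) by (induction x rule: generated.induct) auto

lemma exists_nonmult: "\<exists>g\<in>irr S. g mod m \<noteq> 0"
proof (rule ccontr)
  assume "\<not> ?thesis"
  then have h: "\<forall>g\<in>irr S. g mod m = 0" by blast
  obtain x where "x \<in> S" "x mod m = 1" using exists_res[of 1] m1 by blast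
  then show False using all_mod0[OF h, of x] gen_irr[OF ns] by simp
qed

lemma M_gt_m: "m < M"
proof -
  obtain g where g: "g \<in> irr S" "g mod m \<noteq> 0" using exists_nonmult by blast
  have "m \<le> g" using ge_m irr_S irr_nz g(1) by blast
  moreover have "g \<noteq> m" using g(2) by auto
  moreover have "g \<le> M" using le_M g(1) by blast
  ultimately show ?thesis by simp
qed

definition "j = M mod m"

lemma j_pos: "0 < j"
proof (rule ccontr)
  assume "\<not> 0 < j"
  then have "M mod m = 0" unfolding j_def by simp
  then have "m dvd M" by (simp add: mod_0_imp_dvd)
  then have "m dvd M - m" by (simp add: dvd_diff_nat)
  then obtain k where k: "M - m = m * k" by (elim dvdE)
  then have eq: "M = m + m * k" using M_gt_m by simp
  have "M - m \<noteq> 0" using M_gt_m by simp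
  then have nz: "m * k \<noteq> 0" using k by simp
  have "m = 0 \<or> m * k = 0" using irrD[OF M_irr m_S mult_in eq] .
  then show False using m1 nz by simp
qed

lemma j_lt: "j < m" unfolding j_def using m1 by simp

lemma M_w: "M = w j"
proof -
  have wS: "w j \<in> S" and wm: "w j mod m = j" using w_prop j_lt by auto
  have le: "w j \<le> M" using w_le[OF irr_S[OF M_irr]] j_def by simp
  have "M mod m = w j mod m" using wm j_def by simp
  then have "m dvd M - w j" using mod_eq_dvd_iff_nat[OF le] by simp
  then obtain k where k: "M - w j = m * k" by (elim dvdE)
  then have eq: "M = w j + m * k" using le by simp
  have "w j = 0 \<or> m * k = 0" using irrD[OF M_irr wS mult_in eq] .
  moreover have "w j \<noteq> 0" using w_nz j_pos j_lt by blast
  ultimately show ?thesis using eq by simp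
qed

lemma j_le: "j \<le> m - 1" using j_lt by simp

lemma wtop_gt: "w (m-1) > m" using w_ge_m[of "m-1"] m1 by simp

lemma frob: "frobenius S = int (w (m-1) - m)"
proof -
  define F where "F = w (m-1) - m"
  have notin: "F \<notin> S"
  proof
    assume "F \<in> S"
    moreover have "F mod m = m - 1"
    proof -
      have "w (m-1) = F + m" using wtop_gt F_def by simp
      then show ?thesis using w_prop(2)[of "m-1"] m1 by simp
    qed
    ultimately have "w (m-1) \<le> F" using w_le by blast
    moreover have "F < w (m-1)" unfolding F_def using wtop_gt m1 by simp
    ultimately show False by simp
  qed
  have above: "y \<in> S" if "y > F" for y
  proof -
    define i where "i = y mod m"
    have i: "i < m" using i_def m1 by simp
    show ?thesis
    proof (cases "i = 0")
      case True
      then have "m dvd y" using i_def by (simp add: mod_0_imp_dvd)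
      then obtain k where "y = m * k" by (elim dvdE)
      then show ?thesis using mult_in by simp
    next
      case False
      then have "w i \<le> w (m-1)" using w_mono[of i "m-1"] i by simp
      then have "y + m > w i" using that F_def wtop_gt by simp
      moreover have "y mod m = w i mod m" using w_prop(2)[OF i] i_def by simp
      ultimately have "w i \<le> y"
      proof -
        assume a: "y + m > w i" "y mod m = w i mod m"
        show "w i \<le> y"
        proof (rule ccontr)
          assume "\<not> w i \<le> y"
          then have "y < w i" by simp
          then have "m dvd w i - y" using mod_eq_dvd_iff_nat[of y "w i" m] a(2) by simp
          moreover have "0 < w i - y" "w i - y < m" using \<open>y < w i\<close> a(1) by auto
          ultimately show False by (meson nat_dvd_not_less)
        qed
      qed
      then show ?thesis using in_S_ge i i_def by blast
    qed
  qed
  have "Max (UNIV - S) = F"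
  proof (rule Max_eqI)
    show "finite (UNIV - S)" using ns by (simp add: numerical_semigroup_def)
    show "F \<in> UNIV - S" using notin by simp
    fix y assume "y \<in> UNIV - S" then show "y \<le> F" using above by (meson DiffD2 not_le)
  qed
  then show ?thesis unfolding frobenius_def F_def by simp
qed

end

lemma modsum: "a < (m::nat) \<Longrightarrow> b < m \<Longrightarrow> (a+b) mod m = (if a + b < m then a+b else a+b-m)"
  by (simp add: le_mod_geq)

context MS begin

abbreviation "G \<equiv> irr S"

definition "gen x = generated (insert x G)"

definition "X = {x. 2 \<le> x mod m \<and> w (x mod m - 1) < x \<and> x < w (x mod m) \<and> M < x}"

lemma G_lt: "g \<in> G \<Longrightarrow> M < x \<Longrightarrow> g < x" by (meson le_M le_less_trans)

lemma S_sub: "S \<subseteq> gen x"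
proof -
  have "generated G \<subseteq> generated (insert x G)" by (rule gen_mono) blast
  then show ?thesis unfolding gen_def using gen_irr[OF ns] by simp
qed

lemma x_gen: "x \<in> gen x" unfolding gen_def by (rule gen_in) simp

lemma below0: "t \<in> generated (insert x G) \<Longrightarrow> t \<in> S \<or> x \<le> t"
proof (induction t rule: generated.induct)
  case gen_zero then show ?case using zeroS by simp
next
  case (gen_add a t)
  show ?case
  proof (cases "a = x")
    case True then show ?thesis by simp
  next
    case False
    then have "a \<in> S" using gen_add.hyps(1) irr_S by blast
    then show ?thesis using gen_add.IH closed by auto
  qed
qed

lemma below: "t \<in> gen x \<Longrightarrow> t < x \<Longrightarrow> t \<in> S"
  using below0[of t x] unfolding gen_def by auto

lemma gen_ns: "numerical_semigroup (gen x)"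
  unfolding numerical_semigroup_def
proof (intro conjI ballI)
  show "0 \<in> gen x" unfolding gen_def by (rule gen_zero)
  fix a b assume "a \<in> gen x" "b \<in> gen x"
  then show "a + b \<in> gen x" unfolding gen_def by (rule gen_closed)
next
  have "UNIV - gen x \<subseteq> UNIV - S" using S_sub by blast
  then show "finite (UNIV - gen x)" using ns finite_subset unfolding numerical_semigroup_def by blast
qed

lemma x_notS: "x \<in> X \<Longrightarrow> x \<notin> S"
  unfolding X_def using w_le[of x "x mod m"] by auto

lemma irr_gen: assumes "x \<in> X" shows "irr (gen x) = insert x G"
proof
  show "irr (gen x) \<subseteq> insert x G" using irr_sub_gen[of "insert x G" "gen x"] unfolding gen_def by simp
  have Mx: "M < x" using assms X_def by simp
  have xS: "x \<notin> S" using x_notS[OF assms] .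
  have "x \<in> irr (gen x)"
  proof (rule irrI)
    show "x \<in> gen x" by (rule x_gen)
    show "x \<noteq> 0" using Mx by simp
    fix a b assume ab: "a \<in> gen x" "b \<in> gen x" "x = a + b"
    show "a = 0 \<or> b = 0"
    proof (rule ccontr)
      assume "\<not> (a = 0 \<or> b = 0)"
      then have "a < x" "b < x" using ab by auto
      then have "a \<in> S" "b \<in> S" using below ab by auto
      then show False using closed xS ab(3) by auto
    qed
  qed
  moreover have "g \<in> irr (gen x)" if g: "g \<in> G" for g
  proof (rule irrI)
    show "g \<in> gen x" using S_sub irr_S g by blast
    show "g \<noteq> 0" using irr_nz g by blast
    fix a b assume ab: "a \<in> gen x" "b \<in> gen x" "g = a + b"
    have "g < x" using G_lt g Mx by blast
    then have "a < x" "b < x" using ab by auto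
    then have "a \<in> S" "b \<in> S" using below ab by auto
    then show "a = 0 \<or> b = 0" using irrD[OF g] ab(3) by blast
  qed
  ultimately show "insert x G \<subseteq> irr (gen x)" by blast
qed

lemma Gfin: "finite G" using irr_finite[OF ns] .
lemma Gne: "G \<noteq> {}" using irr_nonempty[OF ns] .

lemma maxgen_gen: assumes "x \<in> X" shows "maxgen (gen x) = x"
proof -
  have Mx: "M < x" using assms X_def by simp
  have "Max (insert x G) = x" using Gfin Gne Mx M_def by (simp add: Max_insert)
  then show ?thesis unfolding maxgen_def msg_eq[OF gen_ns] irr_gen[OF assms] .
qed

lemma msg_gen: assumes "x \<in> X" shows "msg (gen x) - {maxgen (gen x)} = msg S"
proof -
  have "x \<notin> G" using x_notS[OF assms] irr_S by blast
  then show ?thesis unfolding msg_eq[OF gen_ns] irr_gen[OF assms] maxgen_gen[OF assms] msgS by simp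
qed

lemma mult_gen: assumes "x \<in> X" shows "mult (gen x) = m"
proof -
  have Mx: "M < x" using assms X_def by simp
  have "Min (insert x G) = min x (Min G)" using Gfin Gne by (simp add: Min_insert)
  also have "\<dots> = m" using m_Min Mx M_gt_m by simp
  finally show ?thesis unfolding mult_def msg_eq[OF gen_ns] irr_gen[OF assms] .
qed

lemma rgen_gen: assumes "x \<in> X" shows "rgen (gen x) = rgen S"
proof -
  have Mx: "M < x" using assms X_def by simp
  have ne: "G - {m} \<noteq> {}" using M_irr M_gt_m by blast
  have fin: "finite (G - {m})" using Gfin by simp
  have le: "Min (G - {m}) \<le> M" 
  proof (rule Min_le[OF fin])
    show "M \<in> G - {m}" using M_irr M_gt_m by simp
  qed
  have "x \<noteq> m" using Mx M_gt_m by simp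
  then have "insert x G - {m} = insert x (G - {m})" by blast
  then have "Min (insert x G - {m}) = min x (Min (G - {m}))" using fin ne by (simp add: Min_insert)
  also have "\<dots> = Min (G - {m})" using le Mx by simp
  finally show ?thesis unfolding rgen_def mult_gen[OF assms] msg_eq[OF gen_ns] irr_gen[OF assms] msgS mm .
qed

end

context MS begin

lemma gen_repr0: "t \<in> generated (insert x G) \<Longrightarrow> \<exists>s\<in>S. \<exists>n. t = s + n*x"
proof (induction t rule: generated.induct)
  case gen_zero then show ?case using zeroS by force
next
  case (gen_add a t)
  then obtain s n where sn: "s \<in> S" "t = s + n*x" by blast
  show ?case
  proof (cases "a = x")
    case True
    then have "a + t = s + Suc n * x" using sn by simp
    then show ?thesis using sn by blast
  next
    case False
    then have "a \<in> S" using gen_add.hyps(1) irr_S by blast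
    then have "a + s \<in> S" using closed sn by blast
    moreover have "a + t = (a + s) + n * x" using sn by simp
    ultimately show ?thesis by blast
  qed
qed

lemma gen_repr: "t \<in> gen x \<Longrightarrow> \<exists>s\<in>S. \<exists>n. t = s + n*x"
  using gen_repr0 unfolding gen_def by blast

lemma nx_in: "s \<in> S \<Longrightarrow> s + n*x \<in> gen x"
proof (induction n)
  case 0 then show ?case using S_sub by auto
next
  case (Suc n)
  have eq: "s + Suc n * x = (s + n*x) + x" by simp
  have "(s + n*x) + x \<in> gen x" using gen_closed[of "s + n*x" "insert x G" x] Suc x_gen unfolding gen_def by blast
  then show ?case by (simp only: eq)
qed

lemma Pp_gen: assumes xX: "x \<in> X" shows "Pp (gen x) m"
proof -
  define i where "i = x mod m"
  have i: "2 \<le> i" "i < m" "w (i - 1) < x" "x < w i" using xX m1 unfolding X_def i_def by auto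
  have Q: "\<forall>s\<in>S. 2 \<le> (s + n*x) mod m \<longrightarrow> (\<exists>t'\<in>gen x. t' < s + n*x \<and> t' mod m = (s + n*x) mod m - 1)" for n
  proof (induction n)
    case 0
    show ?case
    proof (intro ballI impI)
      fix s assume s: "s \<in> S" "2 \<le> (s + 0*x) mod m"
      then obtain t where "t \<in> S" "t < s" "t mod m = s mod m - 1" using PpS unfolding Pp_def by auto
      then show "\<exists>t'\<in>gen x. t' < s + 0*x \<and> t' mod m = (s + 0*x) mod m - 1" using S_sub by auto
    qed
  next
    case (Suc n)
    show ?case
    proof (intro ballI impI)
      fix s assume s: "s \<in> S" "2 \<le> (s + Suc n * x) mod m"
      define u where "u = s + n * x"
      have tu: "s + Suc n * x = u + x" unfolding u_def by simp
      have uin: "u \<in> gen x" unfolding u_def using nx_in s(1) .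
      define c where "c = u mod m"
      have c: "c < m" using c_def m1 by simp
      have "(u + x) mod m = (c + i) mod m" unfolding c_def i_def by (simp add: mod_add_eq)
      then have tmod: "(u + x) mod m = (if c + i < m then c + i else c + i - m)"
        using modsum[OF c i(2)] by simp
      have k2: "2 \<le> (u + x) mod m" using s(2) unfolding tu .
      show "\<exists>t'\<in>gen x. t' < s + Suc n * x \<and> t' mod m = (s + Suc n * x) mod m - 1"
      proof (cases "c = 0")
        case True
        then have "(u + x) mod m = i" using tmod i by simp
        moreover have "w (i-1) \<in> S" using w_prop(1)[of "i-1"] i by simp
        then have "w (i-1) \<in> gen x" using S_sub[of x] by blast
        moreover have "w (i-1) mod m = i - 1" using w_prop(2)[of "i-1"] i by auto
        moreover have "w (i-1) < u + x" using i(3) by simp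
        ultimately show ?thesis unfolding tu by (intro bexI[of _ "w (i-1)"] conjI) simp_all
      next
        case False
        show ?thesis
        proof (cases "c = 1")
          case True
          have "1 + i < m"
          proof (rule ccontr)
            assume "\<not> 1 + i < m"
            then have "(u+x) mod m = 1 + i - m" using tmod True by simp
            moreover have "1 + i - m = 0" using i(2) by simp
            ultimately show False using k2 by simp
          qed
          then have "(u + x) mod m = i + 1" using tmod True by simp
          moreover have "u \<noteq> 0"
          proof
            assume "u = 0" then show False using True c_def by simp
          qed
          then have "x < u + x" by simp
          ultimately show ?thesis unfolding tu using x_gen i_def by (intro bexI[of _ x] conjI) simp_all
        next
          case False
          then have c2: "2 \<le> u mod m" using \<open>c \<noteq> 0\<close> c_def by simp
          obtain s' n' where sn: "s' \<in> S" "u = s' + n'*x" using gen_repr[OF uin] by blast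
          have IHu: "\<exists>t'\<in>gen x. t' < u \<and> t' mod m = u mod m - 1"
            using Suc.IH s(1) c2 unfolding u_def by blast
          then obtain t'' where t'': "t'' \<in> gen x" "t'' < u" "t'' mod m = c - 1" using c_def by blast
          have in': "t'' + x \<in> gen x" using gen_closed[of t'' "insert x G" x] t''(1) x_gen unfolding gen_def by simp
          have c1: "c - 1 < m" using c by simp
          have "(t'' + x) mod m = (c - 1 + i) mod m" using t''(3) unfolding i_def by (metis mod_add_eq)
          then have mod': "(t'' + x) mod m = (if c - 1 + i < m then c - 1 + i else c - 1 + i - m)"
            using modsum[OF c1 i(2)] by simp
          have "(t'' + x) mod m = (u + x) mod m - 1"
          proof (cases "c + i < m")
            case True
            then have "c - 1 + i < m" by simp
            then show ?thesis using mod' tmod True \<open>c \<noteq> 0\<close> by simp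
          next
            case False
            then have e1: "(u + x) mod m = c + i - m" using tmod by simp
            then have "c + i - m \<ge> 2" using k2 by simp
            then have "\<not> c - 1 + i < m" by simp
            then have "(t'' + x) mod m = c - 1 + i - m" using mod' by simp
            then show ?thesis using e1 \<open>c + i - m \<ge> 2\<close> \<open>c \<noteq> 0\<close> by simp
          qed
          moreover have "t'' + x < u + x" using t''(2) by simp
          ultimately show ?thesis unfolding tu using in' by (intro bexI[of _ "t'' + x"] conjI) simp_all
        qed
      qed
    qed
  qed
  show ?thesis unfolding Pp_def
  proof (intro ballI impI)
    fix t assume t: "t \<in> gen x" "2 \<le> t mod m"
    obtain s n where "s \<in> S" "t = s + n*x" using gen_repr[OF t(1)] by blast
    then show "\<exists>t'\<in>gen x. t' < t \<and> t' mod m = t mod m - 1" using Q[of n] t(2) by blast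
  qed
qed

lemma MANS_gen: assumes "x \<in> X" shows "MANS (gen x)"
proof -
  interpret T: NSm "gen x" m
    using gen_ns mult_gen[OF assms] m1 by unfold_locales auto
  show ?thesis using T.Pp_imp_MANS[OF Pp_gen[OF assms]] .
qed

end

lemma card_res: assumes "(m::nat) > 0"
  shows "card {x. a < x \<and> x < a + 1 + k*m \<and> x mod m = (a+1) mod m} = k"
proof (induction k)
  case 0
  have "{x. a < x \<and> x < a + 1 + 0*m \<and> x mod m = (a+1) mod m} = {}" by auto
  then show ?case by simp
next
  case (Suc k)
  let ?A = "\<lambda>k. {x. a < x \<and> x < a + 1 + k*m \<and> x mod m = (a+1) mod m}"
  have eq: "?A (Suc k) = insert (a + 1 + k*m) (?A k)"
  proof
    show "?A (Suc k) \<subseteq> insert (a + 1 + k*m) (?A k)"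
    proof
      fix x assume x: "x \<in> ?A (Suc k)"
      show "x \<in> insert (a + 1 + k*m) (?A k)"
      proof (rule ccontr)
        assume nx: "x \<notin> insert (a + 1 + k*m) (?A k)"
        then have gt: "a + 1 + k*m < x" using x by auto
        have lt: "x < a + 1 + k*m + m" using x by simp
        have "x mod m = (a + 1 + k*m) mod m" using x by simp
        then have "m dvd x - (a + 1 + k*m)" using mod_eq_dvd_iff_nat[of "a + 1 + k*m" x m] gt by simp
        moreover have "0 < x - (a + 1 + k*m)" "x - (a + 1 + k*m) < m" using gt lt by auto
        ultimately show False by (meson nat_dvd_not_less)
      qed
    qed
    show "insert (a + 1 + k*m) (?A k) \<subseteq> ?A (Suc k)" using assms by auto
  qed
  have fin: "finite (?A k)" by (rule finite_subset[of _ "{..< a + 1 + k*m}"]) auto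
  have "a + 1 + k*m \<notin> ?A k" by simp
  then show ?case using eq fin Suc.IH by simp
qed

context MS begin

lemma child_X: assumes T: "T \<in> MA m r" and ch: "msg S = msg T - {maxgen T}"
  shows "\<exists>x\<in>X. T = gen x"
proof -
  have nsT: "numerical_semigroup T" and mT: "mult T = m" and mansT: "MANS T"
    using T unfolding MA_def by auto
  interpret T: NSm T m using nsT mT m1 by unfold_locales auto
  define x where "x = maxgen T"
  have H: "msg T = irr T" using msg_eq[OF nsT] .
  have xH: "x \<in> irr T" unfolding x_def maxgen_def H using irr_finite[OF nsT] irr_nonempty[OF nsT] by simp
  have Hle: "h \<le> x" if "h \<in> irr T" for h unfolding x_def maxgen_def H using irr_finite[OF nsT] that by simp
  have GH: "G = irr T - {x}" using ch unfolding msgS H x_def .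
  then have HG: "irr T = insert x G" using xH by blast
  have Tg: "T = gen x" unfolding gen_def using gen_irr[OF nsT] HG by simp
  have Mx: "M < x"
  proof -
    have "M \<in> irr T - {x}" using M_irr GH by simp
    then show ?thesis using Hle by fastforce
  qed
  have xS: "x \<notin> S"
  proof
    assume xS: "x \<in> S"
    have "x \<notin> G" using GH by simp
    moreover have "x \<noteq> 0" using irr_nz xH by blast
    ultimately obtain a b where ab: "a \<in> S" "b \<in> S" "a \<noteq> 0" "b \<noteq> 0" "x = a + b"
      using not_irr[OF xS] by blast
    have "a \<in> T" "b \<in> T" using ab S_sub Tg by auto
    then have "a = 0 \<or> b = 0" using irrD[OF xH] ab(5) by blast
    then show False using ab by simp
  qed
  define i where "i = x mod m"
  have i: "i < m" using i_def m1 by simp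
  have xw: "x < w i"
  proof (rule ccontr)
    assume "\<not> x < w i"
    then have "x \<in> S" using in_S_ge[of x i] i i_def by simp
    then show False using xS by simp
  qed
  have i0: "i \<noteq> 0"
  proof
    assume "i = 0" then show False using xw w0 by simp
  qed
  have i1: "i \<noteq> 1"
  proof
    assume "i = 1"
    moreover have "w 1 \<le> w j" using w_mono[of 1 j] j_pos j_le by simp
    ultimately show False using xw Mx M_w by simp
  qed
  have i2: "2 \<le> i" using i0 i1 by simp
  have "x \<in> T" using xH irr_S by blast
  then obtain t where t: "t \<in> T" "t < x" "t mod m = i - 1"
    using T.MANS_imp_Pp[OF mansT] i2 i_def unfolding Pp_def by force
  then have "t \<in> S" using below Tg by blast
  then have "w (i - 1) \<le> t" using w_le t(3) by blast
  then have "x \<in> X" unfolding X_def using i2 xw Mx t(2) i_def by simp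
  then show ?thesis using Tg by blast
qed

definition "Z c = {x. w (c-1) < x \<and> x < w c \<and> x mod m = c}"

lemma card_Z: assumes "2 \<le> c" "c < m" shows "m * card (Z c) + 1 + w (c-1) = w c"
proof -
  define a where "a = w (c-1)"
  have am: "a mod m = c - 1" unfolding a_def using w_prop(2)[of "c-1"] assms by simp
  have a1: "(a + 1) mod m = c"
  proof -
    have "(a + 1) mod m = (c - 1 + 1) mod m" using am by (metis mod_Suc_eq Suc_eq_plus1)
    then show ?thesis using assms by simp
  qed
  have lt: "a < w c" unfolding a_def using w_strict[of "c-1" c] assms by simp
  have bm: "w c mod m = (a + 1) mod m" using w_prop(2)[of c] assms a1 by simp
  have "m dvd w c - (a + 1)" using mod_eq_dvd_iff_nat[of "a+1" "w c" m] lt bm by simp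
  then obtain k where k: "w c - (a + 1) = m * k" by (elim dvdE)
  then have wc: "w c = a + 1 + k * m" using lt by (simp add: mult.commute)
  have "Z c = {x. a < x \<and> x < a + 1 + k*m \<and> x mod m = (a+1) mod m}"
    unfolding Z_def a_def[symmetric] wc a1 ..
  then have "card (Z c) = k" using card_res[of m a k] m1 by simp
  then show ?thesis using wc a_def by (simp add: mult.commute)
qed

definition "Y n = {x \<in> X. x < w n}"

lemma Y_count: "m * card (Y (m-1)) + (m - 1 - j) + w j = w (m-1)"
  using j_le
proof (induction rule: dec_induct)
  case base
  have "Y j = {}" unfolding Y_def X_def using M_w by auto
  then show ?case by simp
next
  case (step n)
  have n1: "1 \<le> n" using step.hyps j_pos by simp
  have nm: "Suc n \<le> m - 1" using step.hyps by simp
  have wlt: "w n < w (Suc n)" using w_strict[of n "Suc n"] n1 nm by simp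
  have eq: "Y (Suc n) = Y n \<union> Z (Suc n)"
  proof
    show "Y (Suc n) \<subseteq> Y n \<union> Z (Suc n)"
    proof
      fix x assume x: "x \<in> Y (Suc n)"
      define i where "i = x mod m"
      have xi: "2 \<le> i" "w (i - 1) < x" "x < w i" "M < x" "x < w (Suc n)"
        using x unfolding Y_def X_def i_def by auto
      have im: "i < m" using i_def m1 by simp
      show "x \<in> Y n \<union> Z (Suc n)"
      proof (cases "x < w n")
        case True then show ?thesis using x unfolding Y_def by simp
      next
        case False
        have "i = Suc n"
        proof (rule ccontr)
          assume ne: "i \<noteq> Suc n"
          show False
          proof (cases "i \<le> n")
            case True
            then have "w i \<le> w n" using w_mono[of i n] xi(1) nm by simp
            then show False using False xi(3) by simp
          next
            case False
            then have "Suc n \<le> i - 1" using ne by simp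
            then have "w (Suc n) \<le> w (i - 1)" using w_mono[of "Suc n" "i-1"] im by simp
            then show False using xi(2) xi(5) by simp
          qed
        qed
        then show ?thesis unfolding Z_def using xi i_def by simp
      qed
    qed
    show "Y n \<union> Z (Suc n) \<subseteq> Y (Suc n)"
    proof
      fix x assume "x \<in> Y n \<union> Z (Suc n)"
      then show "x \<in> Y (Suc n)"
      proof
        assume "x \<in> Y n" then show ?thesis unfolding Y_def using wlt by auto
      next
        assume z: "x \<in> Z (Suc n)"
        then have z': "w n < x" "x < w (Suc n)" "x mod m = Suc n" unfolding Z_def by auto
        have "w j \<le> w n" using w_mono[of j n] j_pos step.hyps nm by simp
        then have "M < x" using M_w z' by simp
        then show ?thesis unfolding Y_def X_def using z' n1 by simp
      qed
    qed
  qed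
  have disj: "Y n \<inter> Z (Suc n) = {}" unfolding Y_def Z_def by auto
  have finY: "finite (Y n)" unfolding Y_def by (rule finite_subset[of _ "{..< w n}"]) auto
  have finZ: "finite (Z (Suc n))" unfolding Z_def by (rule finite_subset[of _ "{..< w (Suc n)}"]) auto
  have cardeq: "card (Y (Suc n)) = card (Y n) + card (Z (Suc n))"
    unfolding eq using card_Un_disjoint[OF finY finZ disj] .
  have cz: "m * card (Z (Suc n)) + 1 + w n = w (Suc n)" using card_Z[of "Suc n"] n1 nm by simp
  have "m * card (Y (Suc n)) + (Suc n - j) + w j = (m * card (Y n) + (n - j) + w j) + m * card (Z (Suc n)) + 1"
    using cardeq step.hyps by (simp add: algebra_simps Suc_diff_le)
  then show ?case using step.IH cz by simp
qed

lemma Y_X: "Y (m-1) = X"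
proof
  show "Y (m-1) \<subseteq> X" unfolding Y_def by auto
  show "X \<subseteq> Y (m-1)"
  proof
    fix x assume x: "x \<in> X"
    define i where "i = x mod m"
    have "1 \<le> i" "x < w i" using x unfolding X_def i_def by auto
    moreover have "i < m" using i_def m1 by simp
    then have "i \<le> m - 1" by simp
    ultimately have "x < w (m-1)" using w_mono[of i "m-1"] by simp
    then show "x \<in> Y (m-1)" unfolding Y_def using x by simp
  qed
qed

lemma card_X: "int (card X) = (frobenius S - int M) div int m + 1"
proof -
  define c where "c = card X"
  define D where "D = m - 1 - j"
  have eq: "m * c + D + w j = w (m-1)" using Y_count Y_X c_def D_def by simp
  have Dm: "D < m" using D_def m1 by simp
  have "frobenius S - int M = int (w (m-1)) - int m - int (w j)" using frob wtop_gt M_w by simp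
  also have "\<dots> = int m * (int c - 1) + int D" using eq[symmetric] by (simp add: algebra_simps)
  finally have f: "frobenius S - int M = int D + (int c - 1) * int m" by (simp add: algebra_simps)
  have "(int D + (int c - 1) * int m) div int m = (int c - 1) + int D div int m"
    using m1 by simp
  also have "int D div int m = 0" using Dm by simp
  finally show ?thesis using f c_def by simp
qed

end

theorem proposition4p15:
  fixes m r :: nat and S :: "nat set"
  assumes "m > 1" and "r > 2" and "S \<in> MA m r"
  shows "int (card (children_MA m r S)) = (frobenius S - int (maxgen S)) div int m + 1"
proof -
  have nsS: "numerical_semigroup S" and mS: "mult S = m" and mansS: "MANS S" and rS: "rgen S = r"
    using assms(3) unfolding MA_def by auto
  interpret MS S m using nsS mS mansS assms(1) by unfold_locales auto
  have ch: "children_MA m r S = gen ` X"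
  proof
    show "children_MA m r S \<subseteq> gen ` X"
    proof
      fix T assume "T \<in> children_MA m r S"
      then have "T \<in> MA m r" "msg S = msg T - {maxgen T}" unfolding children_MA_def by auto
      then show "T \<in> gen ` X" using child_X by blast
    qed
    show "gen ` X \<subseteq> children_MA m r S"
    proof
      fix T assume "T \<in> gen ` X"
      then obtain x where x: "x \<in> X" "T = gen x" by blast
      have "gen x \<in> MA m r" unfolding MA_def using gen_ns MANS_gen[OF x(1)] mult_gen[OF x(1)] rgen_gen[OF x(1)] rS by simp
      moreover have "msg S = msg (gen x) - {maxgen (gen x)}" using msg_gen[OF x(1)] by simp
      ultimately show "T \<in> children_MA m r S" unfolding children_MA_def x(2) by simp
    qed
  qed
  have inj: "inj_on gen X" by (rule inj_onI) (metis maxgen_gen)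
  have "card (children_MA m r S) = card X" unfolding ch using card_image[OF inj] .
  moreover have "maxgen S = M" unfolding maxgen_def msgS M_def ..
  ultimately show ?thesis using card_X by simp
qed

end
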